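(* Let $T$ be a rooted edge-weighted full binary tree with $n$ leaves, all root-to-leaf paths of weight $1$, every edge of weight at least $\tau\frac{\log n}{\sqrt{n}}$ for a sufficiently large constant $\tau$, whose topology is known, with experiment outcomes on all triples of leaves generated by the homogeneous noise model. Let $\mathsf{lc}_r$ be the left child of the root $r$. Then there is a procedure (Compute-light-tree) which, with high probability, computes $h_v$ for all vertices $v$ in the subtree rooted at $\mathsf{lc}_r$, each with additive error $\Theta(\sqrt{\log n/n})$.
   Context: Distances $d$ between leaves are path weights (an ultrametric). For each unordered triple of distinct leaves a single experiment $Q(a,b,c)$ returns one pair, independently across triples, with $\Pr[Q(a,b,c)=(a,b)]=\frac{d(a,c)+d(b,c)}{2(d(a,b)+d(b,c)+d(a,c))}$ (and symmetrically). For a vertex $v$, $h_v$ is the total weight of a path from $v$ to any leaf in its subtree, and $\mathsf{NL}(v)$ is the number of leaves in the subtree rooted at $v$. The children of every internal vertex are ordered as left child $\mathsf{lc}$ and right child $\mathsf{rc}$ with $\mathsf{NL}(\mathsf{rc})\ge\mathsf{NL}(\mathsf{lc})$. "With high probability" means probability $1-o(1)$ as $n\to\infty$. *)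

theory Defs
  imports "HOL-Probability.Probability" "HOL-Library.Sublist"
begin

text \<open>Topology of a rooted full binary tree with ordered children.
  Vertices are identified with their positions: the list of left (False) /
  right (True) turns from the root. The root is the empty list.\<close>

datatype topo = Lf | Nd topo topo

fun positions :: "topo \<Rightarrow> bool list set" where
  "positions Lf = {[]}"
| "positions (Nd l r) = {[]} \<union> (Cons False ` positions l) \<union> (Cons True ` positions r)"

fun leaves :: "topo \<Rightarrow> bool list set" where
  "leaves Lf = {[]}"
| "leaves (Nd l r) = (Cons False ` leaves l) \<union> (Cons True ` leaves r)"

fun nleaves :: "topo \<Rightarrow> nat" where
  "nleaves Lf = 1"
| "nleaves (Nd l r) = nleaves l + nleaves r"

fun ordered :: "topo \<Rightarrow> bool" where
  "ordered Lf = True"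
| "ordered (Nd l r) = (nleaves l \<le> nleaves r \<and> ordered l \<and> ordered r)"

text \<open>Edge weights: w p is the weight of the edge entering vertex p (p nonempty).
  pw w v u: weight of the path from vertex v down to vertex u (v a prefix of u).\<close>
definition pw :: "(bool list \<Rightarrow> real) \<Rightarrow> bool list \<Rightarrow> bool list \<Rightarrow> real" where
  "pw w v u = (\<Sum>i\<in>{length v<..length u}. w (take i u))"

definition hv :: "topo \<Rightarrow> (bool list \<Rightarrow> real) \<Rightarrow> bool list \<Rightarrow> real" where
  "hv t w v = pw w v (SOME u. u \<in> leaves t \<and> prefix v u)"

fun lcp :: "bool list \<Rightarrow> bool list \<Rightarrow> bool list" where
  "lcp (x # xs) (y # ys) = (if x = y then x # lcp xs ys else [])"
| "lcp _ _ = []"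

text \<open>Distance between leaves = weight of the path between them (through their lca).\<close>
definition ldist :: "(bool list \<Rightarrow> real) \<Rightarrow> bool list \<Rightarrow> bool list \<Rightarrow> real" where
  "ldist w a b = pw w (lcp a b) a + pw w (lcp a b) b"

text \<open>Homogeneous noise model on a triple S = {a,b,c}: the returned pair is S - {c}
  with probability (d(a,c)+d(b,c)) / (2 (d(a,b)+d(b,c)+d(a,c))).
  The denominator below is sum over ordered pairs, i.e. 2(d(a,b)+d(b,c)+d(a,c)).\<close>
definition excl_prob :: "(bool list \<Rightarrow> real) \<Rightarrow> bool list set \<Rightarrow> bool list \<Rightarrow> real" where
  "excl_prob w S c =
     (if c \<in> S then (\<Sum>x\<in>S - {c}. ldist w x c) / (\<Sum>x\<in>S. \<Sum>y\<in>S - {x}. ldist w x y) else 0)"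

definition triple_pmf :: "(bool list \<Rightarrow> real) \<Rightarrow> bool list set \<Rightarrow> bool list set pmf" where
  "triple_pmf w S = map_pmf (\<lambda>c. S - {c}) (embed_pmf (excl_prob w S))"

definition triples :: "topo \<Rightarrow> bool list set set" where
  "triples t = {S. S \<subseteq> leaves t \<and> card S = 3}"

text \<open>Joint distribution of all experiment outcomes, independent across triples.
  An outcome is a function mapping each triple of leaves to the returned pair.\<close>
definition outcomes :: "topo \<Rightarrow> (bool list \<Rightarrow> real) \<Rightarrow> (bool list set \<Rightarrow> bool list set) pmf" where
  "outcomes t w = Pi_pmf (triples t) {} (triple_pmf w)"

end

theory Submission
  imports Defs "HOL-Real_Asymp.Real_Asymp"
begin


lemma finite_positions: "finite (positions t)"
  by (induction t) auto
lemma finite_leaves: "finite (leaves t)"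
  by (induction t) auto
lemma leaves_sub: "leaves t \<subseteq> positions t"
  by (induction t) auto

lemma card_leaves: "card (leaves t) = nleaves t"
proof (induction t)
  case Lf then show ?case by simp
next
  case (Nd l r)
  have "card (Cons False ` leaves l \<union> Cons True ` leaves r) =
        card (Cons False ` leaves l) + card (Cons True ` leaves r)"
    by (rule card_Un_disjoint) (auto simp: finite_leaves)
  also have "\<dots> = card (leaves l) + card (leaves r)"
    by (simp add: card_image)
  finally show ?case using Nd by simp
qed

lemma card_positions0: "card (positions t) + 1 \<le> 2 * nleaves t"
proof (induction t)
  case Lf then show ?case by simp
next
  case (Nd l r)
  let ?F = "Cons False ` positions l" and ?R = "Cons True ` positions r"
  have e: "positions (Nd l r) = insert [] (?F \<union> ?R)" by auto
  have "card (insert [] (?F \<union> ?R)) \<le> Suc (card (?F \<union> ?R))"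
    by (simp add: card_insert_if finite_positions)
  also have "card (?F \<union> ?R) \<le> card ?F + card ?R" by (rule card_Un_le)
  also have "card ?F = card (positions l)" by (simp add: card_image)
  also have "card ?R = card (positions r)" by (simp add: card_image)
  finally have "card (positions (Nd l r)) \<le> 1 + card (positions l) + card (positions r)"
    unfolding e by simp
  moreover have "nleaves l \<ge> 1" "nleaves r \<ge> 1"
    by (induction l; simp) (induction r; simp)
  ultimately show ?case using Nd by simp
qed

lemma card_positions: "card (positions t) \<le> 2 * nleaves t"
  using card_positions0[of t] by simp

lemma nleaves_pos: "nleaves t \<ge> 1"
  by (induction t) auto

lemma prefix_closed: "u \<in> positions t \<Longrightarrow> prefix p u \<Longrightarrow> p \<in> positions t"
proof (induction t arbitrary: u p)
  case Lf then show ?case by simp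
next
  case (Nd l r)
  show ?case
  proof (cases p)
    case Nil then show ?thesis by simp
  next
    case (Cons x p')
    with Nd.prems obtain u' where "u = x # u'" "prefix p' u'"
      by (cases u) auto
    with Nd show ?thesis using Cons by (cases x) auto
  qed
qed

lemma leaf_below: "p \<in> positions t \<Longrightarrow> \<exists>u\<in>leaves t. prefix p u"
proof (induction t arbitrary: p)
  case Lf then show ?case by simp
next
  case (Nd l r)
  then show ?case
  proof (cases p)
    case Nil
    obtain u where "u \<in> leaves l" using Nd.IH(1)[of "[]"]
      by (cases l) auto
    then show ?thesis using Nil by auto
  next
    case (Cons x p')
    show ?thesis
    proof (cases x)
      case True
      with Nd.prems Cons have "p' \<in> positions r" by auto
      then obtain u where "u \<in> leaves r" "prefix p' u" using Nd.IH(2) by blast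
      then show ?thesis using Cons True by (intro bexI[of _ "True # u"]) auto
    next
      case False
      with Nd.prems Cons have "p' \<in> positions l" by auto
      then obtain u where "u \<in> leaves l" "prefix p' u" using Nd.IH(1) by blast
      then show ?thesis using Cons False by (intro bexI[of _ "False # u"]) auto
    qed
  qed
qed

lemma leaf_max: "v \<in> leaves t \<Longrightarrow> u \<in> positions t \<Longrightarrow> prefix v u \<Longrightarrow> u = v"
proof (induction t arbitrary: u v)
  case Lf then show ?case by simp
next
  case (Nd l r)
  from Nd.prems(1) consider (L) v' where "v = False # v'" "v' \<in> leaves l"
    | (R) v' where "v = True # v'" "v' \<in> leaves r" by auto
  then show ?case
  proof cases
    case L
    with Nd.prems(3) obtain u' where u: "u = False # u'" "prefix v' u'" by (cases u) auto
    with Nd.prems(2) have "u' \<in> positions l" by auto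
    with Nd.IH(1)[of v' u'] L u show ?thesis by simp
  next
    case R
    with Nd.prems(3) obtain u' where u: "u = True # u'" "prefix v' u'" by (cases u) auto
    with Nd.prems(2) have "u' \<in> positions r" by auto
    with Nd.IH(2)[of v' u'] R u show ?thesis by simp
  qed
qed

lemma internal_child: "v \<in> positions t \<Longrightarrow> v \<notin> leaves t \<Longrightarrow> v @ [x] \<in> positions t"
proof (induction t arbitrary: v)
  case Lf then show ?case by simp
next
  case (Nd l r)
  show ?case
  proof (cases v)
    case Nil
    have "[] \<in> positions l" "[] \<in> positions r" by (cases l; simp) (cases r; simp)
    then show ?thesis using Nil by (cases x) auto
  next
    case (Cons y v')
    show ?thesis
    proof (cases y)
      case True
      with Nd.prems Cons have "v' \<in> positions r" "v' \<notin> leaves r" by auto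
      with Nd.IH(2) have "v' @ [x] \<in> positions r" by blast
      then show ?thesis using Cons True by simp
    next
      case False
      with Nd.prems Cons have "v' \<in> positions l" "v' \<notin> leaves l" by auto
      with Nd.IH(1) have "v' @ [x] \<in> positions l" by blast
      then show ?thesis using Cons False by simp
    qed
  qed
qed

lemma pw_split:
  assumes "prefix v u"
  shows "pw w [] u = pw w [] v + pw w v u"
proof -
  have eq: "{0<..length u} = {0<..length v} \<union> {length v<..length u}"
    using prefix_length_le[OF assms] by auto
  have "pw w [] u = (\<Sum>i\<in>{0<..length v}. w (take i u)) + (\<Sum>i\<in>{length v<..length u}. w (take i u))"
    unfolding pw_def by (simp only: list.size eq, subst sum.union_disjoint) auto
  moreover have "(\<Sum>i\<in>{0<..length v}. w (take i u)) = (\<Sum>i\<in>{0<..length v}. w (take i v))"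
    using assms by (intro sum.cong refl) (auto simp: prefix_def)
  ultimately show ?thesis by (simp add: pw_def)
qed

lemma pw_nonneg:
  assumes "u \<in> positions t" "\<forall>p\<in>positions t - {[]}. w p \<ge> 0"
  shows "pw w v u \<ge> 0"
  unfolding pw_def
proof (rule sum_nonneg)
  fix i assume i: "i \<in> {length v<..length u}"
  have "take i u \<in> positions t" using prefix_closed[OF assms(1)] by (simp add: take_is_prefix)
  moreover have "take i u \<noteq> []" using i by auto
  ultimately show "w (take i u) \<ge> 0" using assms(2) by auto
qed

lemma lcp_sym: "lcp a b = lcp b a"
  by (induction a b rule: lcp.induct) auto

lemma lcp_split: "lcp (v @ False # xs) (v @ True # ys) = v"
  by (induction v) auto

lemma lcp_split': "lcp (v @ x # xs) (v @ y # ys) = v" if "x \<noteq> y"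
  using that by (induction v) auto

lemma lcp_FT: "lcp (False # xs) (True # ys) = []" by simp

lemma ldist_sym: "ldist w a b = ldist w b a"
  unfolding ldist_def by (simp add: lcp_sym)



lemma triple_bern:
  assumes d: "a \<noteq> b" "a \<noteq> c" "b \<noteq> c"
    and dab: "ldist w a b = 2 * H" and dac: "ldist w a c = 2" and dbc: "ldist w b c = 2"
    and H: "H \<ge> 0"
  shows "map_pmf (\<lambda>R. R = {a,b}) (triple_pmf w {a,b,c}) = bernoulli_pmf (1 / (H + 2))"
proof -
  let ?S = "{a,b,c}"
  have dba: "ldist w b a = 2 * H" and dca: "ldist w c a = 2" and dcb: "ldist w c b = 2"
    using dab dac dbc ldist_sym by metis+
  have D: "(\<Sum>x\<in>?S. \<Sum>y\<in>?S - {x}. ldist w x y) = 4 * H + 8"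
    using d dab dac dbc dba dca dcb by (simp add: insert_Diff_if)
  have ea: "excl_prob w ?S a = (2 * H + 2) / (4 * H + 8)"
    unfolding excl_prob_def D using d dab dac dbc dba dca dcb by (simp add: insert_Diff_if)
  have eb: "excl_prob w ?S b = (2 * H + 2) / (4 * H + 8)"
    unfolding excl_prob_def D using d dab dac dbc dba dca dcb by (simp add: insert_Diff_if)
  have ec: "excl_prob w ?S c = 4 / (4 * H + 8)"
    unfolding excl_prob_def D using d dab dac dbc dba dca dcb by (simp add: insert_Diff_if)
  have eo: "excl_prob w ?S x = 0" if "x \<notin> ?S" for x
    using that unfolding excl_prob_def by simp
  have nn: "excl_prob w ?S x \<ge> 0" for x
    using ea eb ec eo H by (cases "x \<in> ?S") auto
  have sum1: "(\<Sum>x\<in>?S. excl_prob w ?S x) = 1"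
  proof -
    have "(\<Sum>x\<in>?S. excl_prob w ?S x) = (2 * H + 2) / (4 * H + 8) + (2 * H + 2) / (4 * H + 8) + 4 / (4 * H + 8)"
      using d by (simp add: ea eb ec)
    also have "\<dots> = ((2 * H + 2) + (2 * H + 2) + 4) / (4 * H + 8)"
      by (simp add: add_divide_distrib)
    also have "(2 * H + 2) + (2 * H + 2) + 4 = 4 * H + 8" by simp
    also have "(4 * H + 8) / (4 * H + 8) = 1" using H by simp
    finally show ?thesis .
  qed
  have int1: "(\<integral>\<^sup>+ x. ennreal (excl_prob w ?S x) \<partial>count_space UNIV) = 1"
  proof -
    have "(\<integral>\<^sup>+ x. ennreal (excl_prob w ?S x) \<partial>count_space UNIV) = (\<Sum>x\<in>?S. ennreal (excl_prob w ?S x))"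
      by (rule nn_integral_count_space') (auto simp: eo)
    also have "\<dots> = ennreal (\<Sum>x\<in>?S. excl_prob w ?S x)"
      by (rule sum_ennreal) (simp add: nn)
    finally show ?thesis using sum1 by simp
  qed
  have pE: "pmf (embed_pmf (excl_prob w ?S)) x = excl_prob w ?S x" for x
    by (rule pmf_embed_pmf[OF nn int1])
  have pre: "(\<lambda>x. ?S - {x} = {a, b}) -` {True} = {c}"
  proof -
    have "?S - {x} \<noteq> {a,b}" if "x \<noteq> c" for x
    proof -
      have "c \<in> ?S - {x}" using that by simp
      moreover have "c \<notin> {a,b}" using d by auto
      ultimately show ?thesis by blast
    qed
    moreover have "?S - {c} = {a,b}" using d by auto
    ultimately show ?thesis by auto
  qed
  have pT: "pmf (map_pmf (\<lambda>R. R = {a,b}) (triple_pmf w ?S)) True = 1 / (H + 2)"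
  proof -
    have "pmf (map_pmf (\<lambda>R. R = {a,b}) (triple_pmf w ?S)) True
        = pmf (map_pmf (\<lambda>x. ?S - {x} = {a,b}) (embed_pmf (excl_prob w ?S))) True"
      unfolding triple_pmf_def map_pmf_comp by simp
    also have "\<dots> = pmf (embed_pmf (excl_prob w ?S)) c"
      unfolding pmf_map pre measure_pmf_single ..
    also have "\<dots> = 1 / (H + 2)" using pE ec H by (simp add: field_simps)
    finally show ?thesis .
  qed
  have p01: "0 \<le> 1 / (H + 2)" "1 / (H + 2) \<le> (1::real)" using H by auto
  show ?thesis
  proof (rule pmf_eqI)
    fix x :: bool
    show "pmf (map_pmf (\<lambda>R. R = {a,b}) (triple_pmf w ?S)) x = pmf (bernoulli_pmf (1 / (H + 2))) x"
      using pT p01 by (cases x) (simp_all add: pmf_False_conv_True[of "map_pmf _ _"])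
  qed
qed



definition leafof :: "topo \<Rightarrow> bool list \<Rightarrow> bool list" where
  "leafof t p = (SOME u. u \<in> leaves t \<and> prefix p u)"
definition Rl :: "topo \<Rightarrow> bool list set" where
  "Rl t = {u \<in> leaves t. prefix [True] u}"
definition TS :: "topo \<Rightarrow> bool list \<Rightarrow> bool list set set" where
  "TS t v = (\<lambda>c. {leafof t (v @ [False]), leafof t (v @ [True]), c}) ` Rl t"
definition cnt :: "topo \<Rightarrow> bool list \<Rightarrow> (bool list set \<Rightarrow> bool list set) \<Rightarrow> nat" where
  "cnt t v Q = card {S \<in> TS t v. Q S = {leafof t (v @ [False]), leafof t (v @ [True])}}"

lemma leafof: "p \<in> positions t \<Longrightarrow> leafof t p \<in> leaves t \<and> prefix p (leafof t p)"
  proof -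
  assume "p \<in> positions t"
  then have "\<exists>u. u \<in> leaves t \<and> prefix p u" using leaf_below[of p t] by blast
  then show ?thesis unfolding leafof_def by (rule someI_ex)
qed

lemma finite_triples: "finite (triples t)"
proof -
  have sub: "triples t \<subseteq> Pow (leaves t)" unfolding triples_def by auto
  have "finite (Pow (leaves t))" using finite_leaves[of t] by simp
  from finite_subset[OF sub this] show ?thesis .
qed

lemma dist_cnt:
  assumes wpos: "\<forall>p\<in>positions t - {[]}. w p \<ge> 0"
    and ultra: "\<forall>u\<in>leaves t. pw w [] u = 1"
    and v: "v \<in> positions t" "prefix [False] v" "v \<notin> leaves t"
  shows "map_pmf (cnt t v) (outcomes t w) = binomial_pmf (card (Rl t)) (1 / (hv t w v + 2))"
    and "0 \<le> hv t w v" "hv t w v \<le> 1"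
proof -
  define a where "a = leafof t (v @ [False])"
  define b where "b = leafof t (v @ [True])"
  define u0 where "u0 = leafof t v"
  define H where "H = hv t w v"
  have H_def': "H = pw w v u0" unfolding H_def hv_def u0_def leafof_def ..
  have a: "a \<in> leaves t" "prefix (v @ [False]) a"
    using leafof[OF internal_child[OF v(1) v(3)]] a_def by auto
  have b: "b \<in> leaves t" "prefix (v @ [True]) b"
    using leafof[OF internal_child[OF v(1) v(3)]] b_def by auto
  have u0: "u0 \<in> leaves t" "prefix v u0" using leafof[OF v(1)] u0_def by auto
  obtain xs where xs: "a = v @ False # xs" using a(2) by (auto simp: prefix_def)
  obtain ys where ys: "b = v @ True # ys" using b(2) by (auto simp: prefix_def)
  obtain v' where v': "v = False # v'" using v(2) by (auto simp: prefix_def)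
  have "pw w [] v + pw w v a = 1" using pw_split[of v a w] a ultra xs by (simp add: prefix_def)
  moreover have "pw w [] v + pw w v b = 1" using pw_split[of v b w] b ultra ys by (simp add: prefix_def)
  moreover have "pw w [] v + pw w v u0 = 1" using pw_split[of v u0 w] u0 ultra by simp
  ultimately have pa: "pw w v a = H" and pb: "pw w v b = H" and pv: "pw w [] v = 1 - H"
    unfolding H_def' by linarith+
  have u0p: "u0 \<in> positions t" using u0(1) leaves_sub by blast
  have H0: "H \<ge> 0" unfolding H_def' by (rule pw_nonneg[OF u0p wpos])
  have H1: "H \<le> 1" using pw_nonneg[OF v(1) wpos, of "[]"] pv by simp
  show "0 \<le> hv t w v" "hv t w v \<le> 1" using H0 H1 H_def by auto
  have dab: "ldist w a b = 2 * H"
    unfolding ldist_def xs ys lcp_split using pa pb xs ys by simp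
  have Rlc: "\<exists>cs. c = True # cs" "c \<in> leaves t" if "c \<in> Rl t" for c
    using that unfolding Rl_def by (auto simp: prefix_def)
  have dac: "ldist w a c = 2" if cR: "c \<in> Rl t" for c
  proof -
    obtain cs where cs: "c = True # cs" using Rlc(1)[OF cR] by blast
    have "lcp a c = []" unfolding xs v' cs by simp
    then show ?thesis unfolding ldist_def using ultra a Rlc(2)[OF cR] by simp
  qed
  have dbc: "ldist w b c = 2" if cR: "c \<in> Rl t" for c
  proof -
    obtain cs where cs: "c = True # cs" using Rlc(1)[OF cR] by blast
    have "lcp b c = []" unfolding ys v' cs by simp
    then show ?thesis unfolding ldist_def using ultra b Rlc(2)[OF cR] by simp
  qed
  have dab': "a \<noteq> b" unfolding xs ys by simp
  have dac': "a \<noteq> c" "b \<noteq> c" if cR: "c \<in> Rl t" for c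
  proof -
    obtain cs where cs: "c = True # cs" using Rlc(1)[OF cR] by blast
    show "a \<noteq> c" "b \<noteq> c" unfolding xs ys v' cs by simp_all
  qed
  define p where "p = 1 / (H + 2)"
  define g where "g = (\<lambda>R::bool list set. R = {a, b})"
  have TS: "TS t v = (\<lambda>c. {a, b, c}) ` Rl t" unfolding TS_def a_def b_def ..
  have finRl: "finite (Rl t)" unfolding Rl_def using finite_leaves by simp
  have finTS: "finite (TS t v)" unfolding TS using finRl by simp
  have TSsub: "TS t v \<subseteq> triples t"
  proof
    fix S assume "S \<in> TS t v"
    then obtain c where c: "c \<in> Rl t" "S = {a, b, c}" unfolding TS by auto
    have "{a, b, c} \<subseteq> leaves t" using a(1) b(1) Rlc(2)[OF c(1)] by simp
    moreover have "card {a, b, c} = 3" using dab' dac'[OF c(1)] by simp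
    ultimately show "S \<in> triples t" unfolding triples_def c(2) by simp
  qed
  have inj: "inj_on (\<lambda>c. {a, b, c}) (Rl t)"
  proof (rule inj_onI)
    fix c c' assume c: "c \<in> Rl t" "c' \<in> Rl t" "{a, b, c} = {a, b, c'}"
    then have "c \<in> {a, b, c'}" by blast
    then show "c = c'" using dac'[OF c(1)] by auto
  qed
  have cardTS: "card (TS t v) = card (Rl t)" unfolding TS using inj by (simp add: card_image)
  have cnt_eq: "cnt t v Q = card {S \<in> TS t v. g (Q S)}" for Q
    unfolding cnt_def g_def a_def b_def ..
  have step1: "map_pmf (cnt t v) (outcomes t w) = map_pmf (cnt t v) (Pi_pmf (TS t v) {} (triple_pmf w))"
  proof -
    have "Pi_pmf (TS t v) {} (triple_pmf w) =
          map_pmf (\<lambda>f x. if x \<in> TS t v then f x else {}) (Pi_pmf (triples t) {} (triple_pmf w))"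
      by (rule Pi_pmf_subset[OF finite_triples TSsub])
    then have "map_pmf (cnt t v) (Pi_pmf (TS t v) {} (triple_pmf w)) =
        map_pmf (\<lambda>Q. cnt t v (\<lambda>x. if x \<in> TS t v then Q x else {})) (outcomes t w)"
      by (simp add: map_pmf_comp outcomes_def)
    also have "\<dots> = map_pmf (cnt t v) (outcomes t w)"
      unfolding cnt_eq by (intro map_pmf_cong refl arg_cong[where f=card]) auto
    finally show ?thesis ..
  qed
  have step2: "map_pmf (cnt t v) (Pi_pmf (TS t v) {} (triple_pmf w)) =
      map_pmf (\<lambda>f. card {S \<in> TS t v. f S}) (Pi_pmf (TS t v) False (\<lambda>S. map_pmf g (triple_pmf w S)))"
  proof -
    have "Pi_pmf (TS t v) False (\<lambda>S. map_pmf g (triple_pmf w S)) = map_pmf ((\<circ>) g) (Pi_pmf (TS t v) {} (triple_pmf w))"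
      by (rule Pi_pmf_map[OF finTS]) (simp add: g_def)
    moreover have "cnt t v = (\<lambda>Q. card {S \<in> TS t v. g (Q S)})" by (intro ext cnt_eq)
    ultimately show ?thesis by (simp add: map_pmf_comp)
  qed
  have step3: "Pi_pmf (TS t v) False (\<lambda>S. map_pmf g (triple_pmf w S)) = Pi_pmf (TS t v) False (\<lambda>_. bernoulli_pmf p)"
  proof (rule Pi_pmf_cong[OF refl refl])
    fix S assume "S \<in> TS t v"
    then obtain c where c: "c \<in> Rl t" "S = {a, b, c}" unfolding TS by auto
    show "map_pmf g (triple_pmf w S) = bernoulli_pmf p"
      unfolding c(2) g_def p_def
      by (rule triple_bern[OF dab' dac'[OF c(1)] dab dac[OF c(1)] dbc[OF c(1)] H0])
  qed
  have p01: "p \<in> {0..1}" unfolding p_def using H0 by auto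
  have step4: "binomial_pmf (card (Rl t)) p = map_pmf (\<lambda>f. card {S \<in> TS t v. f S}) (Pi_pmf (TS t v) False (\<lambda>_. bernoulli_pmf p))"
    by (rule binomial_pmf_altdef'[OF finTS cardTS p01])
  show "map_pmf (cnt t v) (outcomes t w) = binomial_pmf (card (Rl t)) (1 / (hv t w v + 2))"
    using step1 step2 step3 step4 unfolding p_def H_def by simp
qed



lemma inv_err:
  fixes p q d :: real
  assumes "\<bar>q - p\<bar> < d" "1/3 \<le> p" "d \<le> 1/12"
  shows "\<bar>1/q - 1/p\<bar> \<le> 12 * d"
proof -
  have q: "q \<ge> 1/4" using assms by linarith
  have p0: "p > 0" using assms by linarith
  have "1/q - 1/p = (p - q) / (q * p)" using q p0 by (simp add: field_simps)
  then have "\<bar>1/q - 1/p\<bar> = \<bar>p - q\<bar> / (q * p)" using q p0 by simp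
  also have "\<dots> \<le> d / (q * p)"
    using assms(1) q p0 by (intro divide_right_mono) auto
  also have "\<dots> \<le> d / (1/12)"
  proof (rule divide_left_mono)
    show "0 \<le> d" using assms(1) by linarith
    have "(1/4) * (1/3) \<le> q * p" using q assms(2) by (intro mult_mono) auto
    then show "1/12 \<le> q * p" by simp
    show "0 < q * p * (1/12)" using q p0 by simp
  qed
  finally show ?thesis by simp
qed

lemma ev_large:
  assumes "(\<epsilon>::real) > 0"
  shows "eventually (\<lambda>n::nat. 2 \<le> n \<and> ln (real n) / real n \<le> 1/576
           \<and> 4 * real n * exp (-4 * ln (real n)) \<le> \<epsilon>) sequentially"
proof -
  have l1: "(\<lambda>n::nat. ln (real n) / real n) \<longlonglongrightarrow> 0" by real_asymp
  have l2: "(\<lambda>n::nat. 4 * real n * exp (-4 * ln (real n))) \<longlonglongrightarrow> 0" by real_asymp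
  have e1: "eventually (\<lambda>n::nat. ln (real n) / real n < 1/576) sequentially"
    by (rule order_tendstoD(2)[OF l1]) simp
  have e2: "eventually (\<lambda>n::nat. 4 * real n * exp (-4 * ln (real n)) < \<epsilon>) sequentially"
    by (rule order_tendstoD(2)[OF l2]) (simp add: assms)
  have e0: "eventually (\<lambda>n::nat. 2 \<le> n) sequentially" by (rule eventually_ge_at_top)
  show ?thesis using e0 e1 e2 by eventually_elim auto
qed

lemma Rl_Nd: "Rl (Nd l r) = Cons True ` leaves r"
  unfolding Rl_def by (auto simp: prefix_def)



definition est :: "topo \<Rightarrow> (bool list set \<Rightarrow> bool list set) \<Rightarrow> bool list \<Rightarrow> real" where
  "est t Q v = (if v \<in> leaves t then 0 else 1 / (real (cnt t v Q) / real (card (Rl t))) - 2)"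

lemma main_bound:
  assumes eps: "\<epsilon> > 0"
  shows "\<exists>N::nat. \<forall>t w.
       nleaves t \<ge> N \<and> ordered t
       \<and> (\<forall>p\<in>positions t - {[]}. w p \<ge> 1 * ln (real (nleaves t)) / sqrt (real (nleaves t)))
       \<and> (\<forall>u\<in>leaves t. pw w [] u = 1)
       \<longrightarrow> measure_pmf.prob (outcomes t w)
             {Q. \<forall>v\<in>positions t. prefix [False] v \<longrightarrow>
                   \<bar>est t Q v - hv t w v\<bar> \<le> 24 * sqrt (ln (real (nleaves t)) / real (nleaves t))}
           \<ge> 1 - \<epsilon>"
proof -
  obtain N where N: "\<And>n. n \<ge> N \<Longrightarrow> 2 \<le> n \<and> ln (real n) / real n \<le> 1/576
           \<and> 4 * real n * exp (-4 * ln (real n)) \<le> \<epsilon>"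
    using ev_large[OF eps] unfolding eventually_sequentially by blast
  show ?thesis
  proof (intro exI[of _ N] allI impI)
    fix t w
    assume hyp: "nleaves t \<ge> N \<and> ordered t
       \<and> (\<forall>p\<in>positions t - {[]}. w p \<ge> 1 * ln (real (nleaves t)) / sqrt (real (nleaves t)))
       \<and> (\<forall>u\<in>leaves t. pw w [] u = 1)"
    define n where "n = nleaves t"
    have n2: "2 \<le> n" and lnn: "ln (real n) / real n \<le> 1/576"
      and small: "4 * real n * exp (-4 * ln (real n)) \<le> \<epsilon>"
      using N[of n] hyp n_def by auto
    have ultra: "\<forall>u\<in>leaves t. pw w [] u = 1" using hyp by blast
    have lnpos: "ln (real n) \<ge> 0" using n2 by simp
    have wpos: "\<forall>p\<in>positions t - {[]}. w p \<ge> 0"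
    proof
      fix p assume "p \<in> positions t - {[]}"
      then have "w p \<ge> 1 * ln (real n) / sqrt (real n)" using hyp n_def by blast
      moreover have "1 * ln (real n) / sqrt (real n) \<ge> 0" using lnpos by simp
      ultimately show "w p \<ge> 0" by linarith
    qed
    obtain l r where t: "t = Nd l r" using n2 n_def by (cases t) auto
    have ord: "nleaves l \<le> nleaves r" using hyp t by simp
    define m where "m = card (Rl t)"
    have m: "m = nleaves r" unfolding m_def t Rl_Nd by (simp add: card_image card_leaves)
    have m2: "real n \<le> 2 * real m" using ord m n_def t by simp
    have m1: "m > 0" using m nleaves_pos[of r] by simp
    define x where "x = ln (real n) / real n"
    have x0: "x \<ge> 0" using lnpos n2 by (simp add: x_def)
    define \<delta> where "\<delta> = 2 * sqrt x"
    have d0: "\<delta> \<ge> 0" unfolding \<delta>_def using x0 by simp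
    have dsq: "\<delta>\<^sup>2 = 4 * x" unfolding \<delta>_def using x0 by (simp add: power_mult_distrib)
    have d12: "\<delta> \<le> 1/12"
    proof -
      have "sqrt x \<le> sqrt ((1/24)\<^sup>2)" using lnn unfolding x_def by (intro real_sqrt_le_mono) (simp add: power2_eq_square)
      then show ?thesis unfolding \<delta>_def by simp
    qed
    define V where "V = {v \<in> positions t. prefix [False] v \<and> v \<notin> leaves t}"
    define pv where "pv v = 1 / (hv t w v + 2)" for v
    define B where "B v = {Q. \<delta> \<le> \<bar>real (cnt t v Q) / real m - pv v\<bar>}" for v
    have finV: "finite V" unfolding V_def using finite_positions[of t] by simp
    have cardV: "card V \<le> 2 * n"
    proof -
      have "card V \<le> card (positions t)" unfolding V_def using finite_positions[of t] by (intro card_mono) auto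
      then show ?thesis using card_positions[of t] n_def by simp
    qed
    have expb: "2 * exp (real_of_int (- 2 * int m) * \<delta>\<^sup>2) \<le> 2 * exp (-4 * ln (real n))"
    proof -
      have "real_of_int (- 2 * int m) * \<delta>\<^sup>2 = - (2 * real m) * (4 * x)" using dsq by simp
      also have "\<dots> \<le> - real n * (4 * x)" using m2 x0 by (intro mult_right_mono) auto
      also have "\<dots> = -4 * ln (real n)" unfolding x_def using n2 by simp
      finally show ?thesis by simp
    qed
    have probB: "measure_pmf.prob (outcomes t w) (B v) \<le> 2 * exp (-4 * ln (real n))" if vV: "v \<in> V" for v
    proof -
      have vv: "v \<in> positions t" "prefix [False] v" "v \<notin> leaves t" using vV unfolding V_def by auto
      note dc = dist_cnt[OF wpos ultra vv]
      have "B v = cnt t v -` {k. \<delta> \<le> \<bar>real k / real m - pv v\<bar>}" unfolding B_def by auto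
      then have "measure_pmf.prob (outcomes t w) (B v) =
          measure_pmf.prob (map_pmf (cnt t v) (outcomes t w)) {k. \<delta> \<le> \<bar>real k / real m - pv v\<bar>}"
        by (simp add: measure_map_pmf)
      also have "\<dots> = measure_pmf.prob (binomial_pmf m (pv v)) {k. \<delta> \<le> \<bar>real k / real m - pv v\<bar>}"
        using dc(1) unfolding pv_def m_def by simp
      also have "\<dots> \<le> 2 * exp (real_of_int (- 2 * int m) * \<delta>\<^sup>2)"
      proof (rule binomial_distribution.prob_abs_ge'[OF _ m1 d0])
        show "binomial_distribution (pv v)" unfolding binomial_distribution_def pv_def
          using dc(2) by auto
      qed
      also have "\<dots> \<le> 2 * exp (-4 * ln (real n))" by (rule expb)
      finally show ?thesis .
    qed
    have union: "measure_pmf.prob (outcomes t w) (\<Union>v\<in>V. B v) \<le> \<epsilon>"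
    proof -
      have "measure_pmf.prob (outcomes t w) (\<Union>v\<in>V. B v) \<le> (\<Sum>v\<in>V. measure_pmf.prob (outcomes t w) (B v))"
        by (rule measure_pmf.finite_measure_subadditive_finite[OF finV]) auto
      also have "\<dots> \<le> (\<Sum>v\<in>V. 2 * exp (-4 * ln (real n)))" by (rule sum_mono) (rule probB)
      also have "\<dots> = real (card V) * (2 * exp (-4 * ln (real n)))" by simp
      also have "\<dots> \<le> real (2 * n) * (2 * exp (-4 * ln (real n)))"
        using cardV by (intro mult_right_mono) auto
      also have "\<dots> = 4 * real n * exp (-4 * ln (real n))" by simp
      also have "\<dots> \<le> \<epsilon>" by (rule small)
      finally show ?thesis .
    qed
    define A where "A = {Q. \<forall>v\<in>positions t. prefix [False] v \<longrightarrow>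
                   \<bar>est t Q v - hv t w v\<bar> \<le> 24 * sqrt (ln (real (nleaves t)) / real (nleaves t))}"
    have sub: "UNIV - (\<Union>v\<in>V. B v) \<subseteq> A"
    proof
      fix Q assume Q: "Q \<in> UNIV - (\<Union>v\<in>V. B v)"
      show "Q \<in> A" unfolding A_def
      proof (intro CollectI ballI impI)
        fix v assume v: "v \<in> positions t" "prefix [False] v"
        have rhs: "24 * sqrt (ln (real (nleaves t)) / real (nleaves t)) = 12 * \<delta>"
          unfolding \<delta>_def x_def n_def by simp
        show "\<bar>est t Q v - hv t w v\<bar> \<le> 24 * sqrt (ln (real (nleaves t)) / real (nleaves t))"
        proof (cases "v \<in> leaves t")
          case True
          have lf: "leafof t v \<in> leaves t" "prefix v (leafof t v)" using leafof[OF v(1)] by auto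
          have "leafof t v = v" using leaf_max[OF True _ lf(2)] lf(1) leaves_sub by blast
          then have "hv t w v = 0" unfolding hv_def leafof_def[symmetric] by (simp add: pw_def)
          moreover have "est t Q v = 0" using True unfolding est_def by simp
          ultimately show ?thesis unfolding rhs using d0 by simp
        next
          case False
          then have vV: "v \<in> V" unfolding V_def using v by simp
          note dc = dist_cnt[OF wpos ultra v False]
          have "\<not> \<delta> \<le> \<bar>real (cnt t v Q) / real m - pv v\<bar>" using Q vV unfolding B_def by blast
          then have close: "\<bar>real (cnt t v Q) / real m - pv v\<bar> < \<delta>" by simp
          have p3: "1/3 \<le> pv v" unfolding pv_def using dc(2,3) by (simp add: field_simps)
          have err: "\<bar>1 / (real (cnt t v Q) / real m) - 1 / pv v\<bar> \<le> 12 * \<delta>"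
            by (rule inv_err[OF close p3 d12])
          have "1 / pv v = hv t w v + 2" unfolding pv_def by simp
          moreover have "est t Q v = 1 / (real (cnt t v Q) / real m) - 2"
            unfolding est_def m_def using False by simp
          ultimately have "est t Q v - hv t w v = 1 / (real (cnt t v Q) / real m) - 1 / pv v" by simp
          then show ?thesis using err rhs by simp
        qed
      qed
    qed
    have "1 - \<epsilon> \<le> 1 - measure_pmf.prob (outcomes t w) (\<Union>v\<in>V. B v)" using union by simp
    also have "\<dots> = measure_pmf.prob (outcomes t w) (space (measure_pmf (outcomes t w)) - (\<Union>v\<in>V. B v))"
      by (rule measure_pmf.prob_compl[symmetric]) simp
    also have "\<dots> \<le> measure_pmf.prob (outcomes t w) A"
      using sub by (intro measure_pmf.finite_measure_mono) auto
    finally show "measure_pmf.prob (outcomes t w) A \<ge> 1 - \<epsilon>" .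
  qed
qed

theorem lemma5:
  "\<exists>(\<tau>::real) > 0. \<exists>(C::real) > 0.
     \<exists>est :: topo \<Rightarrow> (bool list set \<Rightarrow> bool list set) \<Rightarrow> bool list \<Rightarrow> real.
     \<forall>\<epsilon>::real > 0. \<exists>N::nat. \<forall>t w.
       nleaves t \<ge> N \<and> ordered t
       \<and> (\<forall>p\<in>positions t - {[]}. w p \<ge> \<tau> * ln (real (nleaves t)) / sqrt (real (nleaves t)))
       \<and> (\<forall>u\<in>leaves t. pw w [] u = 1)
       \<longrightarrow> measure_pmf.prob (outcomes t w)
             {Q. \<forall>v\<in>positions t. prefix [False] v \<longrightarrow>
                   \<bar>est t Q v - hv t w v\<bar> \<le> C * sqrt (ln (real (nleaves t)) / real (nleaves t))}
           \<ge> 1 - \<epsilon>"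
proof -
  have "\<forall>\<epsilon>::real > 0. \<exists>N::nat. \<forall>t w.
       nleaves t \<ge> N \<and> ordered t
       \<and> (\<forall>p\<in>positions t - {[]}. w p \<ge> 1 * ln (real (nleaves t)) / sqrt (real (nleaves t)))
       \<and> (\<forall>u\<in>leaves t. pw w [] u = 1)
       \<longrightarrow> measure_pmf.prob (outcomes t w)
             {Q. \<forall>v\<in>positions t. prefix [False] v \<longrightarrow>
                   \<bar>est t Q v - hv t w v\<bar> \<le> 24 * sqrt (ln (real (nleaves t)) / real (nleaves t))}
           \<ge> 1 - \<epsilon>"
    using main_bound by blast
  then show ?thesis
    by (intro exI[of _ "1::real"] conjI exI[of _ "24::real"] exI[of _ est]) simp_all
qed

end
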